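(* Let $\mathcal H$ be the $5$-uniform hypergraph defined below, let $e,f$ be two edges of $\mathcal H$, and let $\phi : V(\mathcal{H}_{ef}) \to V(\mathcal{H})$ be a monomorphism. If $b, e_5 \in \mathcal{H}_{ef}$, then $\phi$ is the identity.
   Context: $\mathcal{H}$ has vertex set $\{z, v_1,\dots,v_9\}$ and edges $r=\{z,v_1,v_3,v_5,v_8\}$, $g=\{z,v_2,v_4,v_7,v_9\}$, $a=\{v_1,v_4,v_6,v_8,v_9\}$, $b=\{v_9,v_1,v_2,v_3,v_4\}$, and $e_i=\{v_i,v_{i+1},v_{i+2},v_{i+3},v_{i+4}\}$ for $i=1,\dots,5$. $\mathcal{H}_{ef}$ is the hypergraph with edge set $E(\mathcal H)\setminus\{e,f\}$, and $V(\mathcal H_{ef})$ is the union of its edges. A monomorphism $\phi: V(\mathcal{H}_{ef})\to V(\mathcal{H})$ is an injective map such that $\{\phi(y): y\in x\}$ is an edge of $\mathcal H$ for every edge $x$ of $\mathcal H_{ef}$; "identity" means $\phi(y)=y$ for all $y\in V(\mathcal H_{ef})$. *)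

theory Defs
  imports Main
begin

text \<open>Vertices: z is encoded as 0, v_i as the natural number i (1 \<le> i \<le> 9).\<close>

definition vz :: nat where "vz = 0"

definition Hr :: "nat set" where "Hr = {vz, 1, 3, 5, 8}"
definition Hg :: "nat set" where "Hg = {vz, 2, 4, 7, 9}"
definition Ha :: "nat set" where "Ha = {1, 4, 6, 8, 9}"
definition Hb :: "nat set" where "Hb = {9, 1, 2, 3, 4}"
definition He :: "nat \<Rightarrow> nat set" where "He i = {i, i+1, i+2, i+3, i+4}"

definition H_edges :: "nat set set" where
  "H_edges = {Hr, Hg, Ha, Hb} \<union> He ` {1..5}"

definition H_verts :: "nat set" where "H_verts = \<Union> H_edges"

definition H_del_edges :: "nat set \<Rightarrow> nat set \<Rightarrow> nat set set" where
  "H_del_edges e f = H_edges - {e, f}"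

definition H_del_verts :: "nat set \<Rightarrow> nat set \<Rightarrow> nat set" where
  "H_del_verts e f = \<Union> (H_del_edges e f)"

definition monomorphism_into_H :: "nat set \<Rightarrow> nat set set \<Rightarrow> (nat \<Rightarrow> nat) \<Rightarrow> bool" where
  "monomorphism_into_H V E \<phi> \<longleftrightarrow>
     inj_on \<phi> V \<and> \<phi> ` V \<subseteq> H_verts \<and> (\<forall>x\<in>E. \<phi> ` x \<in> H_edges)"

end

theory Submission imports Defs begin
definition Es :: "nat list list" where
 "Es = [[0,1,3,5,8],[0,2,4,7,9],[1,4,6,8,9],[9,1,2,3,4],[1,2,3,4,5],[2,3,4,5,6],[3,4,5,6,7],[4,5,6,7,8],[5,6,7,8,9]]"
definition S :: "nat \<Rightarrow> nat set" where "S k = set (Es!k)"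
definition ic :: "nat \<Rightarrow> nat \<Rightarrow> nat" where "ic a b = length (filter (\<lambda>v. v \<in> set (Es!a)) (Es!b))"
definition icT :: "nat list list" where "icT = [[5,1,2,2,3,2,2,2,2],[1,5,2,3,2,2,2,2,2],[2,2,5,3,2,2,2,3,3],[2,3,3,5,4,3,2,1,1],[3,2,2,4,5,4,3,2,1],[2,2,2,3,4,5,4,3,2],[2,2,2,2,3,4,5,4,3],[2,2,3,1,2,3,4,5,4],[2,2,3,1,1,2,3,4,5]]"
definition estep :: "(nat \<times> nat) list list \<Rightarrow> nat \<Rightarrow> (nat \<times> nat) list list" where
 "estep cs k = concat (map (\<lambda>m. map (\<lambda>t. (k,t)#m) (filter (\<lambda>t. t \<notin> set (map snd m) \<and> list_all (\<lambda>(k',t'). icT!t!t' = icT!k!k') m) [0..<9])) cs)"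
definition rem :: "nat \<Rightarrow> nat \<Rightarrow> nat list" where "rem i j = filter (\<lambda>k. k\<noteq>i \<and> k\<noteq>j) [0..<9]"
definition esearch where "esearch i j = foldl estep [[]] (rem i j)"
definition cand :: "(nat \<times> nat) list \<Rightarrow> nat \<Rightarrow> nat list" where
 "cand m v = filter (\<lambda>t. list_all (\<lambda>(k,t'). (v \<in> set (Es!k) \<longrightarrow> t \<in> set (Es!t')) \<and> (v \<notin> set (Es!k) \<longrightarrow> t \<notin> set (Es!t'))) m) [0..<10]"
definition chk where "chk i j = list_all (\<lambda>m. let V = filter (\<lambda>v. list_ex (\<lambda>k. v \<in> set (Es!k)) (rem i j)) [0..<10] in list_ex (\<lambda>v. cand m v = []) V \<or> list_all (\<lambda>v. list_all (\<lambda>t. t = v) (cand m v)) V) (esearch i j)"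

lemma list_all_upt: "list_all P [0..<n] \<longleftrightarrow> (\<forall>x<n. P x)"
  by (auto simp: list_all_iff)

lemma tab_ok: "list_all (\<lambda>a. list_all (\<lambda>b. length (filter (\<lambda>v. v \<in> set (Es!a)) (Es!b)) = icT!a!b \<and> distinct (Es!b) \<and> (a \<noteq> b \<longrightarrow> list_ex (\<lambda>v. (v \<in> set (Es!a)) \<noteq> (v \<in> set (Es!b))) [0..<10]) \<and> list_all (\<lambda>v. v < 10) (Es!a)) [0..<9]) [0..<9]"
  by code_simp

lemma tab: assumes "a < 9" "b < 9" shows "card (S a \<inter> S b) = icT!a!b"
proof -
  have "length (filter (\<lambda>v. v \<in> set (Es!a)) (Es!b)) = icT!a!b" "distinct (Es!b)"
    using tab_ok assms unfolding list_all_upt by auto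
  moreover have "S a \<inter> S b = set (filter (\<lambda>v. v \<in> set (Es!a)) (Es!b))" by (auto simp: S_def)
  ultimately show ?thesis by (metis distinct_card distinct_filter)
qed

lemma S_inj: "inj_on S {..<9}"
proof (rule inj_onI)
  fix a b assume "a \<in> {..<9}" "b \<in> {..<9}" "S a = S b"
  then show "a = b" using tab_ok unfolding list_all_upt list_ex_iff S_def by auto
qed

lemma S_lt: "a < 9 \<Longrightarrow> v \<in> S a \<Longrightarrow> v < 10"
  using tab_ok unfolding list_all_upt list_all_iff S_def by auto

lemma H_edges_S: "H_edges = S ` {..<9}"
  unfolding H_edges_def Hr_def Hg_def Ha_def Hb_def He_def vz_def S_def Es_def
  by (simp add: lessThan_Suc image_insert atLeastAtMostSuc_conv insert_commute eval_nat_numeral)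

lemma Hb_S: "Hb = S 3" and He5_S: "He 5 = S 8"
  by (auto simp: Hb_def He_def S_def Es_def)

lemma estep_mem: "m \<in> set cs \<Longrightarrow> t < 9 \<Longrightarrow> t \<notin> set (map snd m) \<Longrightarrow> list_all (\<lambda>(k',t'). icT!t!t' = icT!k!k') m \<Longrightarrow> (k,t)#m \<in> set (estep cs k)"
proof -
  assume a: "m \<in> set cs" "t < 9" "t \<notin> set (map snd m)" "list_all (\<lambda>(k',t'). icT!t!t' = icT!k!k') m"
  let ?L = "\<lambda>m. map (\<lambda>t. (k,t)#m) (filter (\<lambda>t. t \<notin> set (map snd m) \<and> list_all (\<lambda>(k',t'). icT!t!t' = icT!k!k') m) [0..<9])"
  have "(k,t)#m \<in> set (?L m)" using a by simp
  moreover have "?L m \<in> set (map ?L cs)" using a by simp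
  ultimately have "(k,t)#m \<in> set (concat (map ?L cs))" unfolding set_concat by blast
  then show ?thesis unfolding estep_def .
qed

lemma esearch_sound:
  assumes "distinct ks" "\<forall>k\<in>set ks. \<psi> k < 9" "inj_on \<psi> (set ks)"
    "\<forall>k\<in>set ks. \<forall>k'\<in>set ks. icT!(\<psi> k)!(\<psi> k') = icT!k!k'"
  shows "rev (map (\<lambda>k. (k, \<psi> k)) ks) \<in> set (foldl estep [[]] ks)"
  using assms
proof (induction ks rule: rev_induct)
  case Nil then show ?case by simp
next
  case (snoc x xs)
  have IH: "rev (map (\<lambda>k. (k, \<psi> k)) xs) \<in> set (foldl estep [[]] xs)"
    using snoc.prems by (intro snoc.IH) (auto intro: inj_on_subset)
  have nin: "\<psi> x \<notin> \<psi> ` set xs" using snoc.prems(1,3) by (auto simp: inj_on_def)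
  let ?m = "rev (map (\<lambda>k. (k, \<psi> k)) xs)"
  have "(x, \<psi> x) # ?m \<in> set (estep (foldl estep [[]] xs) x)"
    using nin snoc.prems(2,4) by (intro estep_mem IH) (auto simp: list_all_iff image_image)
  then show ?case by simp
qed

lemma chk_sym: "chk i j = chk j i"
  unfolding chk_def esearch_def rem_def by (simp add: conj_commute)

lemma c_0_1: "chk 0 1" by code_simp
lemma c_0_2: "chk 0 2" by code_simp
lemma c_0_4: "chk 0 4" by code_simp
lemma c_0_5: "chk 0 5" by code_simp
lemma c_0_6: "chk 0 6" by code_simp
lemma c_0_7: "chk 0 7" by code_simp
lemma c_1_2: "chk 1 2" by code_simp
lemma c_1_4: "chk 1 4" by code_simp
lemma c_1_5: "chk 1 5" by code_simp
lemma c_1_6: "chk 1 6" by code_simp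
lemma c_1_7: "chk 1 7" by code_simp
lemma c_2_4: "chk 2 4" by code_simp
lemma c_2_5: "chk 2 5" by code_simp
lemma c_2_6: "chk 2 6" by code_simp
lemma c_2_7: "chk 2 7" by code_simp
lemma c_4_5: "chk 4 5" by code_simp
lemma c_4_6: "chk 4 6" by code_simp
lemma c_4_7: "chk 4 7" by code_simp
lemma c_5_6: "chk 5 6" by code_simp
lemma c_5_7: "chk 5 7" by code_simp
lemma c_6_7: "chk 6 7" by code_simp

lemma d_1_0: "chk 1 0" using c_0_1 chk_sym by metis
lemma d_2_0: "chk 2 0" using c_0_2 chk_sym by metis
lemma d_4_0: "chk 4 0" using c_0_4 chk_sym by metis
lemma d_5_0: "chk 5 0" using c_0_5 chk_sym by metis
lemma d_6_0: "chk 6 0" using c_0_6 chk_sym by metis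
lemma d_7_0: "chk 7 0" using c_0_7 chk_sym by metis
lemma d_2_1: "chk 2 1" using c_1_2 chk_sym by metis
lemma d_4_1: "chk 4 1" using c_1_4 chk_sym by metis
lemma d_5_1: "chk 5 1" using c_1_5 chk_sym by metis
lemma d_6_1: "chk 6 1" using c_1_6 chk_sym by metis
lemma d_7_1: "chk 7 1" using c_1_7 chk_sym by metis
lemma d_4_2: "chk 4 2" using c_2_4 chk_sym by metis
lemma d_5_2: "chk 5 2" using c_2_5 chk_sym by metis
lemma d_6_2: "chk 6 2" using c_2_6 chk_sym by metis
lemma d_7_2: "chk 7 2" using c_2_7 chk_sym by metis
lemma d_5_4: "chk 5 4" using c_4_5 chk_sym by metis
lemma d_6_4: "chk 6 4" using c_4_6 chk_sym by metis
lemma d_7_4: "chk 7 4" using c_4_7 chk_sym by metis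
lemma d_6_5: "chk 6 5" using c_5_6 chk_sym by metis
lemma d_7_5: "chk 7 5" using c_5_7 chk_sym by metis
lemma d_7_6: "chk 7 6" using c_6_7 chk_sym by metis

lemma chk_list: "\<forall>i\<in>{0,1,2,4,5,6,7::nat}. \<forall>j\<in>{0,1,2,4,5,6,7::nat}. i \<noteq> j \<longrightarrow> chk i j"
  by (simp add: c_0_1 d_1_0 c_0_2 d_2_0 c_0_4 d_4_0 c_0_5 d_5_0 c_0_6 d_6_0 c_0_7 d_7_0 c_1_2 d_2_1 c_1_4 d_4_1 c_1_5 d_5_1 c_1_6 d_6_1 c_1_7 d_7_1 c_2_4 d_4_2 c_2_5 d_5_2 c_2_6 d_6_2 c_2_7 d_7_2 c_4_5 d_5_4 c_4_6 d_6_4 c_4_7 d_7_4 c_5_6 d_6_5 c_5_7 d_7_5 c_6_7 d_7_6 c_0_1[unfolded One_nat_def] d_1_0[unfolded One_nat_def] c_1_2[unfolded One_nat_def] d_2_1[unfolded One_nat_def] c_1_4[unfolded One_nat_def] d_4_1[unfolded One_nat_def] c_1_5[unfolded One_nat_def] d_5_1[unfolded One_nat_def] c_1_6[unfolded One_nat_def] d_6_1[unfolded One_nat_def] c_1_7[unfolded One_nat_def] d_7_1[unfolded One_nat_def])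

lemma chk_all: assumes "i < 9" "j < 9" "i \<noteq> j" "i \<noteq> 3" "j \<noteq> 3" "i \<noteq> 8" "j \<noteq> 8"
  shows "chk i j"
proof -
  have "i \<in> {0,1,2,4,5,6,7}" using assms(1,4,6) by (auto simp: less_Suc_eq eval_nat_numeral)
  moreover have "j \<in> {0,1,2,4,5,6,7}" using assms(2,5,7) by (auto simp: less_Suc_eq eval_nat_numeral)
  ultimately show ?thesis using assms(3) chk_list by blast
qed

theorem lemma4p10:
  fixes e f :: "nat set" and \<phi> :: "nat \<Rightarrow> nat"
  assumes "e \<in> H_edges" and "f \<in> H_edges" and "e \<noteq> f"
    and "monomorphism_into_H (H_del_verts e f) (H_del_edges e f) \<phi>"
    and "Hb \<in> H_del_edges e f" and "He 5 \<in> H_del_edges e f"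
  shows "\<forall>y\<in>H_del_verts e f. \<phi> y = y"
proof
  obtain i j where ij: "i < 9" "j < 9" "e = S i" "f = S j"
    using assms(1,2) unfolding H_edges_S by auto
  have "i \<noteq> j" using ij assms(3) by auto
  have DE: "H_del_edges e f = S ` set (rem i j)"
  proof -
    have "H_del_edges e f = S ` {..<9} - S ` {i, j}" using ij by (simp add: H_del_edges_def H_edges_S)
    also have "\<dots> = S ` ({..<9} - {i, j})"
      using ij by (intro inj_on_image_set_diff[OF S_inj, symmetric]) auto
    also have "{..<9} - {i, j} = set (rem i j)" by (auto simp: rem_def)
    finally show ?thesis .
  qed
  have i38: "i \<noteq> 3" "j \<noteq> 3" "i \<noteq> 8" "j \<noteq> 8"
    using assms(5,6) unfolding DE Hb_S He5_S rem_def using S_inj ij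
    by (auto dest: inj_onD)
  have remlt: "k \<in> set (rem i j) \<Longrightarrow> k < 9" for k by (auto simp: rem_def)
  let ?V = "H_del_verts e f"
  have V: "?V = (\<Union>k\<in>set (rem i j). S k)" unfolding H_del_verts_def DE by simp
  have inj: "inj_on \<phi> ?V" and edg: "\<forall>x\<in>H_del_edges e f. \<phi> ` x \<in> H_edges"
    using assms(4) unfolding monomorphism_into_H_def by auto
  define \<psi> where "\<psi> k = (SOME t. t < 9 \<and> \<phi> ` S k = S t)" for k
  have psi: "\<psi> k < 9 \<and> \<phi> ` S k = S (\<psi> k)" if "k \<in> set (rem i j)" for k
  proof -
    have "\<exists>t. t < 9 \<and> \<phi> ` S k = S t" using edg that unfolding DE H_edges_S by auto
    then show ?thesis unfolding \<psi>_def by (rule someI_ex)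
  qed
  have SV: "S k \<subseteq> ?V" if "k \<in> set (rem i j)" for k using that V by auto
  have psi_inj: "inj_on \<psi> (set (rem i j))"
  proof (rule inj_onI)
    fix a b assume ab: "a \<in> set (rem i j)" "b \<in> set (rem i j)" "\<psi> a = \<psi> b"
    then have "\<phi> ` S a = \<phi> ` S b" using psi by metis
    then have "S a = S b" using inj SV ab by (metis inj_on_image_eq_iff)
    then show "a = b" using S_inj ab remlt by (auto dest: inj_onD)
  qed
  have psi_ic: "icT!(\<psi> a)!(\<psi> b) = icT!a!b" if ab: "a \<in> set (rem i j)" "b \<in> set (rem i j)" for a b
  proof -
    have "icT!(\<psi> a)!(\<psi> b) = card (S (\<psi> a) \<inter> S (\<psi> b))" using tab psi ab by metis
    also have "\<dots> = card (\<phi> ` S a \<inter> \<phi> ` S b)" using psi ab by metis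
    also have "\<phi> ` S a \<inter> \<phi> ` S b = \<phi> ` (S a \<inter> S b)"
      using inj_on_image_Int[OF inj SV SV] ab by metis
    also have "card \<dots> = card (S a \<inter> S b)"
      using inj SV ab by (intro card_image) (auto intro: inj_on_subset)
    also have "\<dots> = icT!a!b" using tab ab remlt by metis
    finally show ?thesis .
  qed
  define m where "m = rev (map (\<lambda>k. (k, \<psi> k)) (rem i j))"
  have m_in: "m \<in> set (esearch i j)" unfolding m_def esearch_def
    using psi psi_inj psi_ic by (intro esearch_sound) (auto simp: rem_def)
  have cand_in: "\<phi> v \<in> set (cand m v)" if v: "v \<in> ?V" for v
  proof -
    have "\<phi> v < 10" using assms(4) v unfolding monomorphism_into_H_def H_verts_def H_edges_S
      using S_lt by blast
    moreover have "(v \<in> S k \<longrightarrow> \<phi> v \<in> S (\<psi> k)) \<and> (v \<notin> S k \<longrightarrow> \<phi> v \<notin> S (\<psi> k))"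
      if k: "k \<in> set (rem i j)" for k
    proof -
      have "\<phi> ` S k = S (\<psi> k)" using psi k by blast
      moreover have "v \<notin> S k \<Longrightarrow> \<phi> v \<notin> \<phi> ` S k" using inj SV[OF k] v by (auto dest: inj_onD)
      ultimately show ?thesis by auto
    qed
    ultimately show ?thesis unfolding cand_def m_def S_def by (auto simp: list_all_iff)
  qed
  have Vlist: "set (filter (\<lambda>v. list_ex (\<lambda>k. v \<in> set (Es!k)) (rem i j)) [0..<10]) = ?V"
    unfolding V using S_lt remlt by (auto simp: list_ex_iff S_def)
  have c: "chk i j" using chk_all ij \<open>i \<noteq> j\<close> i38 by blast
  fix y assume y: "y \<in> ?V"
  from c m_in have "list_ex (\<lambda>v. cand m v = []) (filter (\<lambda>v. list_ex (\<lambda>k. v \<in> set (Es!k)) (rem i j)) [0..<10])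
     \<or> list_all (\<lambda>v. list_all (\<lambda>t. t = v) (cand m v)) (filter (\<lambda>v. list_ex (\<lambda>k. v \<in> set (Es!k)) (rem i j)) [0..<10])"
    unfolding chk_def Let_def list_all_iff by blast
  then show "\<phi> y = y"
  proof
    assume "list_ex (\<lambda>v. cand m v = []) (filter (\<lambda>v. list_ex (\<lambda>k. v \<in> set (Es!k)) (rem i j)) [0..<10])"
    then obtain v where "v \<in> ?V" "cand m v = []" unfolding list_ex_iff Vlist[symmetric] by blast
    then show ?thesis using cand_in by fastforce
  next
    assume "list_all (\<lambda>v. list_all (\<lambda>t. t = v) (cand m v)) (filter (\<lambda>v. list_ex (\<lambda>k. v \<in> set (Es!k)) (rem i j)) [0..<10])"
    then show ?thesis using y cand_in unfolding list_all_iff Vlist by blast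
  qed
qed
end
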